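(* Fix real numbers $\alpha>0$, $\gamma>0$, $\xi>0$, $\sigma>0$. For $(h,k,p,q)\in\mathbb{R}\times(0,2)\times\mathbb{R}\times\mathbb{R}$ define \[ \sigma_B^2=\frac{h^2}{1-(1-k)^2}\,\sigma^2,\qquad \sigma_F^2=\frac{1}{\alpha^2}\Big[(1-h-p)^2+\frac{h^2(k-q)^2}{1-(1-k)^2}\Big]\sigma^2,\qquad \sigma_W^2=\Big[p^2+\frac{h^2q^2}{1-(1-k)^2}\Big]\sigma^2, \] and $\mathcal{L}(h,k,p,q)=\sigma_W^2+\xi\,\sigma_B^2+\gamma\,\sigma_F^2$. Let \[ \beta=\frac{\gamma}{\xi(\gamma+\alpha^2)}. \] Then $\mathcal{L}$ attains its minimum over $\mathbb{R}\times(0,2)\times\mathbb{R}\times\mathbb{R}$ uniquely at \[ p=q=\xi\,\frac{\sqrt{4\beta+1}-1}{2},\qquad h=\frac{2\beta+1-\sqrt{4\beta+1}}{2\beta},\qquad k=\frac{\sqrt{4\beta+1}-1}{2\beta}. \]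
   Context: Interpretation (not needed for the claim): in a transitive network, after diagonalizing the graph Laplacian, each nonzero singular value $\alpha=\alpha(\theta)$ of the incidence operator gives a scalar mode with i.i.d. zero-mean noise $z(t)$ of variance $\sigma^2$ and linear control $b(t)=(1-k)b(t-1)+h z(t)$ (storage deviation), $f(t)=-\alpha^{-1}\{(1-h-p)z(t)+(k-q)b(t-1)\}$ (flow), $w(t)=p z(t)+q b(t-1)$ (fast generation); $\sigma_B^2,\sigma_F^2,\sigma_W^2$ are the stationary variances of $b,f,w$, and $\gamma,\xi$ are Lagrange weights penalizing flow and storage variance. *)

theory Defs
  imports Complex_Main
begin

definition sigmaB2 :: "real \<Rightarrow> real \<Rightarrow> real \<Rightarrow> real" where
  "sigmaB2 \<sigma> h k = h^2 / (1 - (1 - k)^2) * \<sigma>^2"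

definition sigmaF2 :: "real \<Rightarrow> real \<Rightarrow> real \<Rightarrow> real \<Rightarrow> real \<Rightarrow> real \<Rightarrow> real" where
  "sigmaF2 \<alpha> \<sigma> h k p q =
     (1 / \<alpha>^2) * ((1 - h - p)^2 + h^2 * (k - q)^2 / (1 - (1 - k)^2)) * \<sigma>^2"

definition sigmaW2 :: "real \<Rightarrow> real \<Rightarrow> real \<Rightarrow> real \<Rightarrow> real \<Rightarrow> real" where
  "sigmaW2 \<sigma> h k p q = (p^2 + h^2 * q^2 / (1 - (1 - k)^2)) * \<sigma>^2"

definition lagr :: "real \<Rightarrow> real \<Rightarrow> real \<Rightarrow> real \<Rightarrow> real \<Rightarrow> real \<Rightarrow> real \<Rightarrow> real \<Rightarrow> real" where
  "lagr \<alpha> \<gamma> \<xi> \<sigma> h k p q =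
     sigmaW2 \<sigma> h k p q + \<xi> * sigmaB2 \<sigma> h k + \<gamma> * sigmaF2 \<alpha> \<sigma> h k p q"

end

theory Submission imports Defs begin

lemma key_ident:
  fixes c xi beta k0 h k p q :: real
  assumes c: "c > 0" and xi: "xi > 0" and k0: "k0 > 0"
    and rel: "beta * k0^2 = 1 - k0" and eb: "xi * beta = c / (1 + c)"
    and D: "1 - (1 - k)^2 > 0"
  shows "p^2 + c*(1-h-p)^2 + h^2/(1-(1-k)^2) * (q^2 + xi + c*(k-q)^2)
     = (1+c)*(p - c/(1+c)*(1-h))^2 + (h^2/(1-(1-k)^2))*((1+c)*(q - c/(1+c)*k)^2)
       + h^2 * xi * (k-k0)^2 / (k0^2 * (1-(1-k)^2))
       + (c/(1+c) + xi/k0) * (h - (1-k0))^2 + c/(1+c)*k0^2 + xi*(1-k0)^2/k0"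
proof -
  define e where "e = c/(1+c)"
  define D where "D = 1-(1-k)^2"
  have c1: "1 + c \<noteq> 0" using c by simp
  have ce: "(1+c)*e = c" unfolding e_def using c1 by simp
  have I1: "p^2 + c*(1-h-p)^2 = (1+c)*(p - e*(1-h))^2 + e*(1-h)^2"
  proof -
    have "(1+c)*(p - e*(1-h))^2 + e*(1-h)^2 - (p^2 + c*(1-h-p)^2)
      = 2*p*(1-h)*(c-(1+c)*e) + (1+e)*(1-h)^2*((1+c)*e-c)"
      by (simp add: algebra_simps power2_eq_square)
    then show ?thesis using ce by simp
  qed
  have I2: "q^2 + xi + c*(k-q)^2 = (1+c)*(q - e*k)^2 + (xi + e*k^2)"
  proof -
    have "(1+c)*(q - e*k)^2 + (xi + e*k^2) - (q^2 + xi + c*(k-q)^2)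
      = 2*q*k*(c-(1+c)*e) + (1+e)*k^2*((1+c)*e-c)"
      by (simp add: algebra_simps power2_eq_square)
    then show ?thesis using ce by simp
  qed
  have ee: "e = xi*beta" using eb e_def by simp
  have I3: "(xi + e*k^2)/D = xi/k0 + xi*(k-k0)^2/(k0^2*D)"
  proof -
    have Dp: "D \<noteq> 0" using D D_def by simp
    have "(xi + e*k^2)*k0^2 = xi*k0*D + xi*(k-k0)^2"
      unfolding ee D_def
    proof -
      have "(xi + xi * beta * k^2) * k0^2 = xi*k0^2 + xi*k^2*(beta*k0^2)" by (simp add: algebra_simps)
      also have "\<dots> = xi*k0^2 + xi*k^2*(1-k0)" using rel by simp
      also have "\<dots> = xi * k0 * (1 - (1 - k)^2) + xi * (k - k0)^2" by (simp add: algebra_simps power2_eq_square)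
      finally show "(xi + xi * beta * k^2) * k0^2 = xi * k0 * (1 - (1 - k)^2) + xi * (k - k0)^2" .
    qed
    note H = this
    have k2: "k0^2 \<noteq> 0" using k0 by simp
    have "xi/k0 + xi*(k-k0)^2/(k0^2*D) = (xi*k0*D + xi*(k-k0)^2)/(k0^2*D)"
      using Dp k0 by (simp add: field_simps power2_eq_square)
    also have "\<dots> = (xi + e*k^2)*k0^2/(k0^2*D)" using H by simp
    also have "\<dots> = (xi + e*k^2)/D" using k2 by simp
    finally show ?thesis by simp
  qed
  have I4: "e*(1-h)^2 + (xi/k0)*h^2 = (e + xi/k0)*(h-(1-k0))^2 + e*k0^2 + xi*(1-k0)^2/k0"
  proof -
    have R: "e*k0^2 = xi*(1-k0)"
    proof -
      have "e*k0^2 = xi*(beta*k0^2)" unfolding ee by simp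
      then show ?thesis using rel by simp
    qed
    have "(e + xi/k0)*(h-(1-k0))^2 + e*k0^2 + xi*(1-k0)^2/k0 - (e*(1-h)^2 + (xi/k0)*h^2)
       = 2*(h-1+k0)*k0 * (e - xi*(1-k0)/k0^2)"
      using k0 by (simp add: field_simps power2_eq_square) (simp add: algebra_simps)?
    moreover have "e - xi*(1-k0)/k0^2 = 0" using R k0 by (simp add: field_simps)
    ultimately show ?thesis by simp
  qed
  have "p^2 + c*(1-h-p)^2 + h^2/D * (q^2 + xi + c*(k-q)^2)
     = (1+c)*(p - e*(1-h))^2 + e*(1-h)^2 + h^2/D * ((1+c)*(q - e*k)^2 + (xi + e*k^2))"
    using I1 I2 by simp
  also have "\<dots> = (1+c)*(p - e*(1-h))^2 + e*(1-h)^2 + (h^2/D) * ((1+c)*(q - e*k)^2) + h^2 * ((xi + e*k^2)/D)"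
    by (simp add: algebra_simps add_divide_distrib)
  also have "\<dots> = (1+c)*(p - e*(1-h))^2 + (h^2/D) * ((1+c)*(q - e*k)^2)
       + h^2*xi*(k-k0)^2/(k0^2*D) + (e*(1-h)^2 + (xi/k0)*h^2)"
    unfolding I3 by (simp add: algebra_simps)
  also have "\<dots> = (1+c)*(p - e*(1-h))^2 + (h^2/D) * ((1+c)*(q - e*k)^2)
       + h^2*xi*(k-k0)^2/(k0^2*D) + ((e + xi/k0)*(h-(1-k0))^2 + e*k0^2 + xi*(1-k0)^2/k0)"
    unfolding I4 ..
  finally show ?thesis unfolding e_def D_def by simp
qed

lemma lagr_eq:
  assumes "\<alpha> \<noteq> 0"
  shows "lagr \<alpha> \<gamma> \<xi> \<sigma> h k p q = \<sigma>^2 * (p^2 + (\<gamma>/\<alpha>^2)*(1-h-p)^2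
     + h^2/(1-(1-k)^2) * (q^2 + \<xi> + (\<gamma>/\<alpha>^2)*(k-q)^2))"
  unfolding lagr_def sigmaW2_def sigmaB2_def sigmaF2_def
  by (simp add: algebra_simps add_divide_distrib)

theorem mainTheorem1:
  fixes \<alpha> \<gamma> \<xi> \<sigma> :: real
  assumes "\<alpha> > 0" and "\<gamma> > 0" and "\<xi> > 0" and "\<sigma> > 0"
  defines "\<beta> \<equiv> \<gamma> / (\<xi> * (\<gamma> + \<alpha>^2))"
  defines "p0 \<equiv> \<xi> * (sqrt (4 * \<beta> + 1) - 1) / 2"
  defines "h0 \<equiv> (2 * \<beta> + 1 - sqrt (4 * \<beta> + 1)) / (2 * \<beta>)"
  defines "k0 \<equiv> (sqrt (4 * \<beta> + 1) - 1) / (2 * \<beta>)"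
  shows "k0 \<in> {0<..<2} \<and>
    (\<forall>h k p q. k \<in> {0<..<2} \<longrightarrow> (h, k, p, q) \<noteq> (h0, k0, p0, p0) \<longrightarrow>
        lagr \<alpha> \<gamma> \<xi> \<sigma> h0 k0 p0 p0 < lagr \<alpha> \<gamma> \<xi> \<sigma> h k p q)"
proof -
  note a = assms(1) and g = assms(2) and x = assms(3) and s = assms(4)
  define S where "S = sqrt (4 * \<beta> + 1)"
  have bp: "\<beta> > 0" unfolding \<beta>_def using a g x by (simp add: add_pos_pos)
  have S2: "S^2 = 4*\<beta>+1" unfolding S_def using bp by simp
  have S1: "S > 1" unfolding S_def using bp by simp
  have S3: "S < 2*\<beta>+1"
  proof -
    have "S^2 < (2*\<beta>+1)^2" using S2 bp by (simp add: power2_eq_square algebra_simps)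
    then show ?thesis using bp S1 by (smt (verit) power_mono)
  qed
  have k0S: "k0 = (S-1)/(2*\<beta>)" unfolding k0_def S_def ..
  have k0p: "k0 > 0" using k0S S1 bp by simp
  have k01: "k0 < 1" using k0S S3 bp by (simp add: pos_divide_less_eq)
  have rel: "\<beta> * k0^2 = 1 - k0"
  proof -
    have "\<beta> * ((S-1)/(2*\<beta>))^2 = (S-1)^2/(4*\<beta>)" using bp by (simp add: power_divide field_simps power2_eq_square)
    then have "\<beta> * k0^2 = (S-1)^2/(4*\<beta>)" using k0S by simp
    also have "\<dots> = (S^2 - 2*S + 1)/(4*\<beta>)" by (simp add: power2_eq_square algebra_simps)
    also have "\<dots> = 1 - (S-1)/(2*\<beta>)" using S2 bp by (simp add: field_simps)
    finally show ?thesis using k0S by simp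
  qed
  have h0k: "h0 = 1 - k0" unfolding h0_def k0_def using bp by (simp add: field_simps)
  define c where "c = \<gamma>/\<alpha>^2"
  have cp: "c > 0" unfolding c_def using a g by simp
  have eb1: "\<xi> * \<beta> = \<gamma>/(\<gamma>+\<alpha>^2)" unfolding \<beta>_def using x by simp
  have a2: "\<alpha>^2 > 0" using a by simp
  have eb2: "c/(1+c) = \<gamma>/(\<gamma>+\<alpha>^2)" unfolding c_def using a2 g
    by (simp add: field_simps)
  have eb: "\<xi> * \<beta> = c/(1+c)" using eb1 eb2 by simp
  define e where "e = c/(1+c)"
  have Sk: "S - 1 = 2*\<beta>*k0" using k0S bp by simp
  have p0e: "p0 = e*k0"
  proof -
    have "p0 = \<xi> * (S-1)/2" unfolding p0_def S_def ..
    also have "\<dots> = (\<xi>*\<beta>)*k0" unfolding Sk by simp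
    finally show ?thesis unfolding e_def eb .
  qed
  define F where "F = (\<lambda>h k p q. p^2 + c*(1-h-p)^2 + h^2/(1-(1-k)^2) * (q^2 + \<xi> + c*(k-q)^2))"
  have L: "lagr \<alpha> \<gamma> \<xi> \<sigma> h k p q = \<sigma>^2 * F h k p q" for h k p q
    unfolding F_def c_def using lagr_eq a by simp
  define K where "K = e*k0^2 + \<xi>*(1-k0)^2/k0"
  have FI: "F h k p q = (1+c)*(p - e*(1-h))^2 + (h^2/(1-(1-k)^2))*((1+c)*(q - e*k)^2)
       + h^2 * \<xi> * (k-k0)^2 / (k0^2 * (1-(1-k)^2))
       + (e + \<xi>/k0) * (h - (1-k0))^2 + K"
    if "1 - (1-k)^2 > 0" for h k p q
    unfolding F_def K_def e_def using key_ident[OF cp x k0p rel eb that] by simp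
  have D0: "1 - (1-k0)^2 > 0" using k0p k01 by (simp add: power2_eq_square algebra_simps)
  have F0: "F h0 k0 p0 p0 = K" using FI[OF D0, of h0 p0 p0] h0k p0e by simp
  have k0in: "k0 \<in> {0<..<2}" using k0p k01 by simp
  have ep: "e > 0" unfolding e_def using cp by simp
  have strict: "K < F h k p q" if kin: "k \<in> {0<..<2}" and ne: "(h, k, p, q) \<noteq> (h0, k0, p0, p0)" for h k p q
  proof -
    have D: "1 - (1-k)^2 > 0" using kin by (simp add: power2_eq_square algebra_simps)
    define A where "A = (1+c)*(p - e*(1-h))^2"
    define B where "B = (h^2/(1-(1-k)^2))*((1+c)*(q - e*k)^2)"
    define C where "C = h^2 * \<xi> * (k-k0)^2 / (k0^2 * (1-(1-k)^2))"
    define E where "E = (e + \<xi>/k0) * (h - (1-k0))^2"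
    have A0: "A \<ge> 0" unfolding A_def using cp by simp
    have B0: "B \<ge> 0" unfolding B_def using cp D by simp
    have C0: "C \<ge> 0" unfolding C_def using x D by simp
    have E0: "E \<ge> 0" unfolding E_def using ep x k0p by simp
    have pos: "A + B + C + E > 0"
    proof (rule ccontr)
      assume "\<not> ?thesis"
      then have z: "A = 0" "B = 0" "C = 0" "E = 0" using A0 B0 C0 E0 by linarith+
      have "e + \<xi>/k0 > 0" using ep x k0p by (simp add: add_pos_pos)
      then have hh: "h = h0" using z(4) h0k unfolding E_def by simp
      have hn: "h \<noteq> 0" using hh h0k k01 by simp
      have kk: "k = k0" using z(3) hn x k0p D unfolding C_def by simp
      have pp: "p = p0" using z(1) cp hh h0k p0e unfolding A_def by simp
      have qq: "q = p0" using z(2) cp hn D kk p0e unfolding B_def by simp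
      show False using ne hh kk pp qq by simp
    qed
    have "F h k p q = A + B + C + E + K" using FI[OF D] unfolding A_def B_def C_def E_def by simp
    then show ?thesis using pos by simp
  qed
  show ?thesis
  proof (intro conjI k0in allI impI)
    fix h k p q assume kin: "k \<in> {0<..<2}" and ne: "(h, k, p, q) \<noteq> (h0, k0, p0, p0)"
    have "F h0 k0 p0 p0 < F h k p q" using strict[OF kin ne] F0 by simp
    then show "lagr \<alpha> \<gamma> \<xi> \<sigma> h0 k0 p0 p0 < lagr \<alpha> \<gamma> \<xi> \<sigma> h k p q"
      unfolding L using s by simp
  qed
qed
end
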